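(* There is a function $C(t,\epsilon)$ such that the following holds for every positive integer $t$ and every $\epsilon\in(0,1)$: let $G$ be a connected balanced bipartite graph with parts $X,Y$, with $\delta(G)\geq C(t,\epsilon)$ and with no induced $S_{t,t}$. Then for all $x\in X$ and $y\in Y$ we have $|N(x)\cap U_Y(\epsilon)|\leq C(t,\epsilon)$ and $|N(y)\cap U_X(\epsilon)|\leq C(t,\epsilon)$.
   Context: For positive integers $a,b$, the biclaw $S_{a,b}$ is the graph with vertex set $\{x,x_1,\dots,x_a,y,y_1,\dots,y_b\}$ and edges $xy$, $xy_1,\dots,xy_b$, $yx_1,\dots,yx_a$; "no induced $S_{t,t}$" means no induced subgraph isomorphic to $S_{t,t}$. Balanced means $|X|=|Y|$. For a bipartite graph with parts $X,Y$, $\Delta_X=\max_{x\in X} d(x)$, $\Delta_Y=\max_{y\in Y}d(y)$, and for $\epsilon\in(0,1)$, $U_X(\epsilon)=\{x\in X: d(x)\leq (1-\epsilon)\Delta_X\}$, $U_Y(\epsilon)=\{y\in Y: d(y)\leq(1-\epsilon)\Delta_Y\}$. $N(v)$ is the neighbourhood and $\delta(G)$ the minimum degree. *)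

theory Defs
  imports Complex_Main
begin

definition graph :: "nat set \<Rightarrow> (nat \<Rightarrow> nat \<Rightarrow> bool) \<Rightarrow> bool" where
  "graph V E \<longleftrightarrow> finite V \<and> (\<forall>u v. E u v \<longrightarrow> u \<in> V \<and> v \<in> V)
     \<and> (\<forall>u v. E u v \<longrightarrow> E v u) \<and> (\<forall>u. \<not> E u u)"

definition nbhd :: "nat set \<Rightarrow> (nat \<Rightarrow> nat \<Rightarrow> bool) \<Rightarrow> nat \<Rightarrow> nat set" where
  "nbhd V E v = {u \<in> V. E v u}"

definition degree :: "nat set \<Rightarrow> (nat \<Rightarrow> nat \<Rightarrow> bool) \<Rightarrow> nat \<Rightarrow> nat" where
  "degree V E v = card (nbhd V E v)"

definition min_degree_ge :: "nat set \<Rightarrow> (nat \<Rightarrow> nat \<Rightarrow> bool) \<Rightarrow> real \<Rightarrow> bool" where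
  "min_degree_ge V E c \<longleftrightarrow> (\<forall>v\<in>V. real (degree V E v) \<ge> c)"

definition connected_graph :: "nat set \<Rightarrow> (nat \<Rightarrow> nat \<Rightarrow> bool) \<Rightarrow> bool" where
  "connected_graph V E \<longleftrightarrow> (\<forall>u\<in>V. \<forall>v\<in>V. E\<^sup>*\<^sup>* u v)"

definition bipartite_parts :: "nat set \<Rightarrow> (nat \<Rightarrow> nat \<Rightarrow> bool) \<Rightarrow> nat set \<Rightarrow> nat set \<Rightarrow> bool" where
  "bipartite_parts V E X Y \<longleftrightarrow> X \<inter> Y = {} \<and> X \<union> Y = V
     \<and> (\<forall>u v. E u v \<longrightarrow> (u \<in> X \<and> v \<in> Y) \<or> (u \<in> Y \<and> v \<in> X))"

definition max_deg :: "nat set \<Rightarrow> (nat \<Rightarrow> nat \<Rightarrow> bool) \<Rightarrow> nat set \<Rightarrow> nat" where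
  "max_deg V E X = Max (degree V E ` X)"

definition low_set :: "nat set \<Rightarrow> (nat \<Rightarrow> nat \<Rightarrow> bool) \<Rightarrow> nat set \<Rightarrow> real \<Rightarrow> nat set" where
  "low_set V E X \<epsilon> = {x \<in> X. real (degree V E x) \<le> (1 - \<epsilon>) * real (max_deg V E X)}"

datatype bcv = BX | BY | BXi nat | BYi nat

definition biclaw_verts :: "nat \<Rightarrow> nat \<Rightarrow> bcv set" where
  "biclaw_verts a b = {BX, BY} \<union> BXi ` {1..a} \<union> BYi ` {1..b}"

fun biclaw_adj :: "bcv \<Rightarrow> bcv \<Rightarrow> bool" where
  "biclaw_adj BX BY = True"
| "biclaw_adj BY BX = True"
| "biclaw_adj BX (BYi _) = True"
| "biclaw_adj (BYi _) BX = True"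
| "biclaw_adj BY (BXi _) = True"
| "biclaw_adj (BXi _) BY = True"
| "biclaw_adj _ _ = False"

definition has_induced_biclaw :: "nat set \<Rightarrow> (nat \<Rightarrow> nat \<Rightarrow> bool) \<Rightarrow> nat \<Rightarrow> nat \<Rightarrow> bool" where
  "has_induced_biclaw V E a b \<longleftrightarrow> (\<exists>f. inj_on f (biclaw_verts a b) \<and> f ` biclaw_verts a b \<subseteq> V
     \<and> (\<forall>u\<in>biclaw_verts a b. \<forall>v\<in>biclaw_verts a b. E (f u) (f v) \<longleftrightarrow> biclaw_adj u v))"

end

theory Submission
  imports Defs
begin


lemma dcount:
  assumes "finite T" "finite R"
  shows "(\<Sum>u\<in>T. card {r\<in>R. P r u}) = (\<Sum>r\<in>R. card {u\<in>T. P r u})"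
proof -
  have "(\<Sum>u\<in>T. card {r\<in>R. P r u}) = (\<Sum>u\<in>T. \<Sum>r\<in>R. (if P r u then 1 else 0::nat))"
    using assms by (simp add: sum.inter_filter[symmetric])
  also have "\<dots> = (\<Sum>r\<in>R. \<Sum>u\<in>T. (if P r u then 1 else 0::nat))"
    by (rule sum.swap)
  also have "\<dots> = (\<Sum>r\<in>R. card {u\<in>T. P r u})"
    using assms by (simp add: sum.inter_filter[symmetric])
  finally show ?thesis .
qed

lemma avg:
  assumes "finite T" "T \<noteq> {}" "finite R" "\<forall>r\<in>R. s \<le> card {u\<in>T. P r u}"
  shows "\<exists>u\<in>T. real (card R) * real s \<le> real (card {r\<in>R. P r u}) * real (card T)"
proof (rule ccontr)
  assume "\<not> ?thesis"
  hence lt: "\<forall>u\<in>T. real (card {r\<in>R. P r u}) * real (card T) < real (card R) * real s" by auto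
  have "(\<Sum>u\<in>T. real (card {r\<in>R. P r u}) * real (card T)) < (\<Sum>u\<in>T. real (card R) * real s)"
    using assms(1,2) lt by (intro sum_strict_mono) auto
  hence "real (\<Sum>u\<in>T. card {r\<in>R. P r u}) * real (card T) < real (card T) * (real (card R) * real s)"
    by (simp add: sum_distrib_right)
  hence "real (\<Sum>u\<in>T. card {r\<in>R. P r u}) < real (card R) * real s"
    using assms(1,2) by (simp add: mult.commute card_gt_0_iff)
  hence "real (\<Sum>r\<in>R. card {u\<in>T. P r u}) < real (card R) * real s"
    using dcount[OF assms(1,3)] by simp
  moreover have "(\<Sum>r\<in>R. s) \<le> (\<Sum>r\<in>R. card {u\<in>T. P r u})"
    using assms(4) by (intro sum_mono) auto
  hence "card R * s \<le> (\<Sum>r\<in>R. card {u\<in>T. P r u})" by simp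
  hence "real (card R) * real s \<le> real (\<Sum>r\<in>R. card {u\<in>T. P r u})"
    by (metis of_nat_le_iff of_nat_mult)
  ultimately show False by linarith
qed

lemma pick:
  fixes Rel :: "nat \<Rightarrow> nat \<Rightarrow> bool"
  assumes tpos: "t > 0"
  shows "\<forall>T R s. finite T \<longrightarrow> finite R \<longrightarrow> j \<le> s \<longrightarrow>
     (\<forall>r\<in>R. s \<le> card {u\<in>T. \<not> Rel r u}) \<longrightarrow>
     real t \<le> real (card R) * ((real s - real j) / real (card T)) ^ j \<longrightarrow>
     (\<exists>U R'. U \<subseteq> T \<and> card U = j \<and> R' \<subseteq> R \<and> t \<le> card R' \<and> (\<forall>r\<in>R'. \<forall>u\<in>U. \<not> Rel r u))"
proof (induction j)
  case 0
  show ?case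
  proof (intro allI impI)
    fix T R :: "nat set" and s :: nat
    assume "real t \<le> real (card R) * ((real s - real 0) / real (card T)) ^ 0"
    hence "t \<le> card R" by simp
    thus "\<exists>U R'. U \<subseteq> T \<and> card U = 0 \<and> R' \<subseteq> R \<and> t \<le> card R' \<and> (\<forall>r\<in>R'. \<forall>u\<in>U. \<not> Rel r u)"
      by (intro exI[of _ "{}"] exI[of _ R]) auto
  qed
next
  case (Suc j)
  show ?case
  proof (intro allI impI)
    fix T R :: "nat set" and s :: nat
    assume fT: "finite T" and fR: "finite R" and js: "Suc j \<le> s"
      and miss: "\<forall>r\<in>R. s \<le> card {u\<in>T. \<not> Rel r u}"
      and cond: "real t \<le> real (card R) * ((real s - real (Suc j)) / real (card T)) ^ Suc j"
    have "R \<noteq> {}"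
    proof
      assume "R = {}"
      with cond tpos show False by simp
    qed
    then obtain r0 where r0: "r0 \<in> R" by auto
    have "s \<le> card {u\<in>T. \<not> Rel r0 u}" using miss r0 by auto
    also have "\<dots> \<le> card T" using fT by (intro card_mono) auto
    finally have sT: "s \<le> card T" .
    hence Tne: "T \<noteq> {}" using js by auto
    obtain u where uT: "u \<in> T" and
      uc: "real (card R) * real s \<le> real (card {r\<in>R. \<not> Rel r u}) * real (card T)"
      using avg[OF fT Tne fR miss] by blast
    define R1 where "R1 = {r\<in>R. \<not> Rel r u}"
    define T1 where "T1 = T - {u}"
    have fT1: "finite T1" "finite R1" using fT fR unfolding T1_def R1_def by auto
    have miss1: "\<forall>r\<in>R1. s - 1 \<le> card {u'\<in>T1. \<not> Rel r u'}"
    proof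
      fix r assume r: "r \<in> R1"
      have eq: "{u'\<in>T1. \<not> Rel r u'} = {u'\<in>T. \<not> Rel r u'} - {u}" unfolding T1_def by auto
      have "u \<in> {u'\<in>T. \<not> Rel r u'}" using r uT unfolding R1_def by auto
      hence "card {u'\<in>T1. \<not> Rel r u'} = card {u'\<in>T. \<not> Rel r u'} - 1"
        unfolding eq using fT by (simp add: card_Diff_singleton)
      thus "s - 1 \<le> card {u'\<in>T1. \<not> Rel r u'}" using miss r unfolding R1_def by auto
    qed
    have cT1: "card T1 = card T - 1" unfolding T1_def using uT fT by simp
    have Tpos: "real (card T) > 0" using Tne fT by (simp add: card_gt_0_iff)
    define a where "a = (real s - real (Suc j)) / real (card T)"
    have a0: "a \<ge> 0" unfolding a_def using js by simp
    have aR1: "real (card R) * a \<le> real (card R1)"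
    proof -
      have "real (card R) * a \<le> real (card R) * (real s / real (card T))"
        unfolding a_def using Tpos by (intro mult_left_mono divide_right_mono) auto
      also have "\<dots> = real (card R) * real s / real (card T)" by simp
      also have "\<dots> \<le> real (card R1)"
        using uc Tpos unfolding R1_def by (simp add: pos_divide_le_eq)
      finally show ?thesis .
    qed
    have aj: "a ^ j \<le> ((real (s - 1) - real j) / real (card T1)) ^ j"
    proof (cases "j = 0")
      case True thus ?thesis by simp
    next
      case False
      hence "card T \<ge> 2" using sT js by auto
      hence T1p: "real (card T1) > 0" using cT1 by simp
      have num: "real s - real (Suc j) = real (s - 1) - real j" using js by (simp add: of_nat_diff)
      have "real (card T1) \<le> real (card T)" using cT1 by simp
      hence "a \<le> (real (s - 1) - real j) / real (card T1)"
        unfolding a_def num using js T1p Tpos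
        by (intro divide_left_mono) auto
      thus ?thesis using a0 by (intro power_mono) auto
    qed
    have "real t \<le> real (card R) * a ^ Suc j" using cond unfolding a_def by simp
    also have "\<dots> = (real (card R) * a) * a ^ j" by simp
    also have "\<dots> \<le> real (card R1) * ((real (s - 1) - real j) / real (card T1)) ^ j"
      using aR1 aj a0 by (intro mult_mono) auto
    finally have cond1: "real t \<le> real (card R1) * ((real (s - 1) - real j) / real (card T1)) ^ j" .
    have "j \<le> s - 1" using js by simp
    then obtain U R' where U: "U \<subseteq> T1" "card U = j" "R' \<subseteq> R1" "t \<le> card R'"
      "\<forall>r\<in>R'. \<forall>u\<in>U. \<not> Rel r u"
      using Suc.IH[rule_format, OF fT1(1) fT1(2) \<open>j \<le> s - 1\<close> miss1[rule_format] cond1] by blast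
    have "finite U" using U(1) fT1 finite_subset by blast
    moreover have "u \<notin> U" using U(1) unfolding T1_def by auto
    ultimately have "card (insert u U) = Suc j" using U(2) by simp
    thus "\<exists>U R'. U \<subseteq> T \<and> card U = Suc j \<and> R' \<subseteq> R \<and> t \<le> card R' \<and> (\<forall>r\<in>R'. \<forall>u\<in>U. \<not> Rel r u)"
      using U uT unfolding T1_def R1_def
      by (intro exI[of _ "insert u U"] exI[of _ R']) auto
  qed
qed



lemma g_facts:
  assumes "graph V E"
  shows "finite V" "E a b \<Longrightarrow> a \<in> V" "E a b \<Longrightarrow> b \<in> V" "E a b \<Longrightarrow> E b a" "\<not> E a a"
  using assms unfolding graph_def by blast+

lemma nbhd_eq: "graph V E \<Longrightarrow> nbhd V E v = {u. E v u}"
  unfolding nbhd_def graph_def by blast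

lemma same_side:
  assumes "graph V E" "bipartite_parts V E X Y" "E a b" "E a c"
  shows "\<not> E b c"
  using assms unfolding graph_def bipartite_parts_def by blast

lemma biclaw_from:
  assumes G: "graph V E" and B: "bipartite_parts V E X Y" and xy: "E x y"
    and U: "U \<subseteq> nbhd V E y - {x}" "card U = t"
    and R: "R \<subseteq> nbhd V E x - {y}" "card R = t"
    and no: "\<forall>r\<in>R. \<forall>u\<in>U. \<not> E r u"
  shows "has_induced_biclaw V E t t"
proof -
  have fV: "finite V" using g_facts[OF G] by simp
  have "U \<subseteq> V" using U(1) unfolding nbhd_def by blast
  hence fU: "finite U" using fV finite_subset by blast
  have "R \<subseteq> V" using R(1) unfolding nbhd_def by blast
  hence fR: "finite R" using fV finite_subset by blast
  obtain g where g: "bij_betw g {1..t} U" using ex_bij_betw_nat_finite_1[OF fU] U(2) by auto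
  obtain h where h: "bij_betw h {1..t} R" using ex_bij_betw_nat_finite_1[OF fR] R(2) by auto
  have gU: "i \<in> {1..t} \<Longrightarrow> g i \<in> U" for i using g by (auto simp: bij_betw_def)
  have hR: "i \<in> {1..t} \<Longrightarrow> h i \<in> R" for i using h by (auto simp: bij_betw_def)
  have ginj: "inj_on g {1..t}" and hinj: "inj_on h {1..t}" using g h by (auto simp: bij_betw_def)
  have Uy: "u \<in> U \<Longrightarrow> E y u \<and> u \<noteq> x" for u using U(1) unfolding nbhd_def by auto
  have Rx: "r \<in> R \<Longrightarrow> E x r \<and> r \<noteq> y" for r using R(1) unfolding nbhd_def by auto
  have sym: "E a b \<Longrightarrow> E b a" for a b using g_facts[OF G] by blast
  have irr: "\<not> E a a" for a using g_facts[OF G] by blast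
  have ss: "E a b \<Longrightarrow> E a c \<Longrightarrow> \<not> E b c" for a b c using same_side[OF G B] by blast
  have yx: "E y x" using sym xy .
  define f where "f v = (case v of BX \<Rightarrow> x | BY \<Rightarrow> y | BXi i \<Rightarrow> g i | BYi i \<Rightarrow> h i)" for v
  have fBX: "f BX = x" and fBY: "f BY = y" and fBXi: "f (BXi i) = g i" and fBYi: "f (BYi i) = h i" for i
    unfolding f_def by auto
  have verts: "v \<in> biclaw_verts t t \<longleftrightarrow> v = BX \<or> v = BY \<or> (\<exists>i\<in>{1..t}. v = BXi i) \<or> (\<exists>i\<in>{1..t}. v = BYi i)" for v
    unfolding biclaw_verts_def by auto
  have a1: "i \<in> {1..t} \<Longrightarrow> E y (g i) \<and> E (g i) y \<and> \<not> E x (g i) \<and> \<not> E (g i) x \<and> g i \<noteq> x \<and> g i \<noteq> y" for i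
  proof -
    assume i: "i \<in> {1..t}"
    have 1: "E y (g i)" "g i \<noteq> x" using Uy[OF gU[OF i]] by auto
    have 2: "\<not> E x (g i)" using ss[OF yx 1(1)] .
    have 3: "g i \<noteq> y" using 1(1) irr by auto
    show ?thesis using 1 2 3 sym by blast
  qed
  have a2: "i \<in> {1..t} \<Longrightarrow> E x (h i) \<and> E (h i) x \<and> \<not> E y (h i) \<and> \<not> E (h i) y \<and> h i \<noteq> y \<and> h i \<noteq> x" for i
  proof -
    assume i: "i \<in> {1..t}"
    have 1: "E x (h i)" "h i \<noteq> y" using Rx[OF hR[OF i]] by auto
    have 2: "\<not> E y (h i)" using ss[OF xy 1(1)] .
    have 3: "h i \<noteq> x" using 1(1) irr by auto
    show ?thesis using 1 2 3 sym by blast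
  qed
  have a3: "i \<in> {1..t} \<Longrightarrow> j \<in> {1..t} \<Longrightarrow> \<not> E (g i) (h j) \<and> \<not> E (h j) (g i) \<and> g i \<noteq> h j" for i j
  proof -
    assume i: "i \<in> {1..t}" and j: "j \<in> {1..t}"
    have "\<not> E (h j) (g i)" using no hR[OF j] gU[OF i] by blast
    moreover have "g i \<noteq> h j"
    proof
      assume "g i = h j"
      hence "E x (g i)" using a2[OF j] by simp
      thus False using a1[OF i] by simp
    qed
    ultimately show ?thesis using sym by blast
  qed
  have a4: "i \<in> {1..t} \<Longrightarrow> j \<in> {1..t} \<Longrightarrow> \<not> E (g i) (g j)" for i j
    using a1 ss by blast
  have a5: "i \<in> {1..t} \<Longrightarrow> j \<in> {1..t} \<Longrightarrow> \<not> E (h i) (h j)" for i j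
    using a2 ss by blast
  have xny: "x \<noteq> y" using xy irr by metis
  have a6: "i \<in> {1..t} \<Longrightarrow> j \<in> {1..t} \<Longrightarrow> x \<noteq> g i \<and> y \<noteq> g i \<and> x \<noteq> h i \<and> y \<noteq> h i \<and> h j \<noteq> g i" for i j
    using a1 a2 a3 by metis
  note facts = a6 a1 a2 a3 a4 a5 xny xny[symmetric] xy yx irr inj_on_eq_iff[OF ginj] inj_on_eq_iff[OF hinj]
  have inj: "inj_on f (biclaw_verts t t)"
  proof (rule inj_onI)
    fix u v assume u: "u \<in> biclaw_verts t t" and v: "v \<in> biclaw_verts t t" and e: "f u = f v"
    show "u = v"
      using u v e unfolding verts
      by (elim disjE bexE) (simp_all add: fBX fBY fBXi fBYi facts)
  qed
  have sub: "f ` biclaw_verts t t \<subseteq> V"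
  proof
    fix w assume "w \<in> f ` biclaw_verts t t"
    then obtain v where v: "v \<in> biclaw_verts t t" "w = f v" by auto
    have xV: "x \<in> V" and yV: "y \<in> V" using g_facts[OF G] xy by blast+
    have gV: "i \<in> {1..t} \<Longrightarrow> g i \<in> V" for i using a1 g_facts(3)[OF G] by blast
    have hV: "i \<in> {1..t} \<Longrightarrow> h i \<in> V" for i using a2 g_facts(3)[OF G] by blast
    show "w \<in> V"
      using v unfolding verts
      by (elim disjE bexE) (auto simp: fBX fBY fBXi fBYi xV yV gV hV)
  qed
  have adj: "\<forall>u\<in>biclaw_verts t t. \<forall>v\<in>biclaw_verts t t. E (f u) (f v) \<longleftrightarrow> biclaw_adj u v"
  proof (intro ballI)
    fix u v assume u: "u \<in> biclaw_verts t t" and v: "v \<in> biclaw_verts t t"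
    show "E (f u) (f v) \<longleftrightarrow> biclaw_adj u v"
      using u v unfolding verts
      by (elim disjE bexE) (simp_all add: fBX fBY fBXi fBYi facts)
  qed
  show ?thesis unfolding has_induced_biclaw_def using inj sub adj by blast
qed



lemma few:
  assumes G: "graph V E" and B: "bipartite_parts V E X Y" and nb: "\<not> has_induced_biclaw V E t t"
    and tp: "t > 0" and xy: "E x y"
    and T: "T \<subseteq> nbhd V E y - {x}" and R: "R \<subseteq> nbhd V E x - {y}" and ap: "0 < \<alpha>"
    and miss: "\<forall>r\<in>R. \<alpha> * real (card T) \<le> real (card {u\<in>T. \<not> E r u})"
    and big: "2 * real t \<le> \<alpha> * real (card T)"
  shows "real (card R) < real t * (2 / \<alpha>) ^ t"
proof (rule ccontr)
  assume "\<not> ?thesis"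
  hence cR: "real t * (2 / \<alpha>) ^ t \<le> real (card R)" by simp
  have fV: "finite V" using g_facts[OF G] by simp
  have "T \<subseteq> V" using T unfolding nbhd_def by blast
  hence fT: "finite T" using fV finite_subset by blast
  have "R \<subseteq> V" using R unfolding nbhd_def by blast
  hence fR: "finite R" using fV finite_subset by blast
  define s where "s = nat \<lceil>\<alpha> * real (card T)\<rceil>"
  have s1: "\<alpha> * real (card T) \<le> real s" unfolding s_def by linarith
  have miss': "\<forall>r\<in>R. s \<le> card {u\<in>T. \<not> E r u}"
  proof
    fix r assume "r \<in> R"
    hence "\<alpha> * real (card T) \<le> real (card {u\<in>T. \<not> E r u})" using miss by blast
    hence "\<lceil>\<alpha> * real (card T)\<rceil> \<le> int (card {u\<in>T. \<not> E r u})" by (simp add: ceiling_le_iff)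
    thus "s \<le> card {u\<in>T. \<not> E r u}" unfolding s_def by (simp add: nat_le_iff)
  qed
  have ts: "2 * real t \<le> real s" using s1 big by linarith
  hence ts': "t \<le> s" by simp
  have Tp: "real (card T) > 0"
  proof -
    have "0 < \<alpha> * real (card T)" using big tp by (smt (verit) of_nat_0_less_iff)
    thus ?thesis using ap by (simp add: zero_less_mult_iff)
  qed
  have ratio: "\<alpha> / 2 \<le> (real s - real t) / real (card T)"
  proof -
    have "\<alpha> * real (card T) / 2 \<le> real s - real t" using s1 ts by linarith
    thus ?thesis using Tp by (simp add: pos_le_divide_eq)
  qed
  have cond: "real t \<le> real (card R) * ((real s - real t) / real (card T)) ^ t"
  proof -
    have one: "(2 / \<alpha>) ^ t * (\<alpha> / 2) ^ t = 1"
      using ap by (simp add: power_mult_distrib[symmetric])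
    have "real t = real t * (2 / \<alpha>) ^ t * (\<alpha> / 2) ^ t" using one by simp
    also have "\<dots> \<le> real (card R) * (\<alpha> / 2) ^ t"
      using cR ap by (intro mult_right_mono) auto
    also have "\<dots> \<le> real (card R) * ((real s - real t) / real (card T)) ^ t"
      using ratio ap by (intro mult_left_mono power_mono) auto
    finally show ?thesis .
  qed
  obtain U R' where UR: "U \<subseteq> T" "card U = t" "R' \<subseteq> R" "t \<le> card R'"
    "\<forall>r\<in>R'. \<forall>u\<in>U. \<not> E r u"
    using pick[OF tp, of t E, rule_format, OF fT fR ts' miss'[rule_format] cond] by blast
  obtain R'' where R'': "R'' \<subseteq> R'" "card R'' = t" using obtain_subset_with_card_n[OF UR(4)] by blast
  have "has_induced_biclaw V E t t"
    using biclaw_from[OF G B xy _ UR(2), of R''] UR T R R'' by blast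
  thus False using nb by blast
qed



lemma miss_card:
  assumes "finite T" "{u\<in>T. E r u} \<subseteq> S" "finite S"
  shows "real (card T) - real (card S) \<le> real (card {u\<in>T. \<not> E r u})"
proof -
  have eq: "T = {u\<in>T. E r u} \<union> {u\<in>T. \<not> E r u}" by auto
  have "card ({u\<in>T. E r u} \<union> {u\<in>T. \<not> E r u}) = card {u\<in>T. E r u} + card {u\<in>T. \<not> E r u}"
    using assms(1) by (intro card_Un_disjoint) auto
  hence "card T = card {u\<in>T. E r u} + card {u\<in>T. \<not> E r u}" using eq[symmetric] by simp
  moreover have "card {u\<in>T. E r u} \<le> card S" using assms(2,3) by (rule card_mono[rotated])
  ultimately show ?thesis by linarith
qed

definition Cf :: "nat \<Rightarrow> real \<Rightarrow> real" where
  "Cf t \<epsilon> = 10 * (real t * (16 / \<epsilon>) ^ t) + 100 * real t / \<epsilon>"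

lemma Cf_facts:
  assumes tp: "t > 0" and e0: "0 < \<epsilon>" and e1: "\<epsilon> < 1"
  shows "real t * (16 / \<epsilon>) ^ t \<ge> 16 * real t"
    and "real t * 8 ^ t \<le> real t * (16 / \<epsilon>) ^ t"
    and "real t * 4 ^ t \<le> real t * 8 ^ t"
    and "Cf t \<epsilon> = 10 * (real t * (16 / \<epsilon>) ^ t) + 100 * real t / \<epsilon>"
    and "100 * real t / \<epsilon> \<ge> 100 * real t"
proof -
  have b: "16 \<le> 16 / \<epsilon>" using e0 e1 by (simp add: pos_le_divide_eq)
  have "(16 / \<epsilon>) ^ 1 \<le> (16 / \<epsilon>) ^ t" using b tp by (intro power_increasing) auto
  hence c: "16 \<le> (16 / \<epsilon>) ^ t" using b by simp
  show "real t * (16 / \<epsilon>) ^ t \<ge> 16 * real t"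
    using mult_left_mono[OF c, of "real t"] by (simp add: mult.commute)
  have b8: "8 \<le> 16 / \<epsilon>" using b by linarith
  have "(8::real) ^ t \<le> (16 / \<epsilon>) ^ t" using b8 by (intro power_mono) auto
  thus "real t * 8 ^ t \<le> real t * (16 / \<epsilon>) ^ t" by (intro mult_left_mono) auto
  have "(4::real) ^ t \<le> 8 ^ t" by (intro power_mono) auto
  thus "real t * 4 ^ t \<le> real t * 8 ^ t" by (intro mult_left_mono) auto
  show "Cf t \<epsilon> = 10 * (real t * (16 / \<epsilon>) ^ t) + 100 * real t / \<epsilon>" by (simp add: Cf_def)
  have "100 * real t * \<epsilon> \<le> 100 * real t" using e0 e1 by (intro mult_left_le) auto
  thus "100 * real t / \<epsilon> \<ge> 100 * real t" using e0 by (simp add: pos_le_divide_eq)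
qed



lemma half:
  fixes t :: nat and \<epsilon> :: real
  assumes tp: "t > 0" and e0: "0 < \<epsilon>" and e1: "\<epsilon> < 1"
    and G: "graph V E" and conn: "connected_graph V E" and BP: "bipartite_parts V E X Y"
    and md: "min_degree_ge V E (Cf t \<epsilon>)" and nb: "\<not> has_induced_biclaw V E t t"
  shows "\<forall>x\<in>X. real (card (nbhd V E x \<inter> low_set V E Y \<epsilon>)) \<le> Cf t \<epsilon>"
proof
  fix x0 assume x0X: "x0 \<in> X"
  define K1 where "K1 = real t * (16 / \<epsilon>) ^ t"
  define K2 where "K2 = real t * 8 ^ t"
  define K3 where "K3 = real t * 4 ^ t"
  define C where "C = Cf t \<epsilon>"
  define Bd where "Bd = K2 + 2 * K1"
  have K1ge: "K1 \<ge> 16 * real t" and K21: "K2 \<le> K1" and K32: "K3 \<le> K2"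
    and Ceq: "C = 10 * K1 + 100 * real t / \<epsilon>" and te: "100 * real t / \<epsilon> \<ge> 100 * real t"
    using Cf_facts[OF tp e0 e1] unfolding K1_def K2_def K3_def C_def by auto
  have t1: "real t \<ge> 1" using tp by simp
  have fV: "finite V" using g_facts[OF G] by simp
  have sym: "E a b \<Longrightarrow> E b a" for a b using g_facts[OF G] by blast
  have inV: "E a b \<Longrightarrow> a \<in> V \<and> b \<in> V" for a b using g_facts[OF G] by blast
  have XY: "X \<inter> Y = {}" "X \<union> Y = V" and side: "E u v \<Longrightarrow> (u \<in> X \<and> v \<in> Y) \<or> (u \<in> Y \<and> v \<in> X)" for u v
    using BP unfolding bipartite_parts_def by blast+
  have XtoY: "x \<in> X \<Longrightarrow> E x y \<Longrightarrow> y \<in> Y" for x y using side XY(1) by blast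
  have YtoX: "y \<in> Y \<Longrightarrow> E y x \<Longrightarrow> x \<in> X" for x y using side XY(1) by blast
  let ?N = "nbhd V E"
  have Neq: "?N v = {u. E v u}" for v using nbhd_eq[OF G] .
  have finN: "finite (?N v)" for v using fV unfolding nbhd_def by simp
  have deg: "v \<in> V \<Longrightarrow> C \<le> real (card (?N v))" for v
    using md unfolding min_degree_ge_def degree_def C_def by blast
  have Cge: "C \<ge> 10 * K1 + 100 * real t" using Ceq te by linarith
  have x0V: "x0 \<in> V" using x0X XY by blast
  have "card (?N x0) > 0" using deg[OF x0V] Cge K1ge t1
    by (smt (verit) of_nat_0_less_iff)
  then obtain y0 where "y0 \<in> ?N x0" by (metis card.empty ex_in_conv less_irrefl)
  hence y0Y: "y0 \<in> Y" using XtoY[OF x0X] Neq by auto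
  have fY: "finite Y" using fV XY finite_subset by blast
  define \<Delta> where "\<Delta> = max_deg V E Y"
  have fimg: "finite (degree V E ` Y)" "degree V E ` Y \<noteq> {}" using fY y0Y by auto
  obtain ys where ysY: "ys \<in> Y" and dys: "degree V E ys = \<Delta>"
    using Max_in[OF fimg] unfolding \<Delta>_def max_deg_def by auto
  have dle: "y \<in> Y \<Longrightarrow> card (?N y) \<le> \<Delta>" for y
    using Max_ge[OF fimg(1)] unfolding \<Delta>_def max_deg_def degree_def by auto
  have ysV: "ys \<in> V" using ysY XY by blast
  have DC: "real \<Delta> \<ge> C" using deg[OF ysV] dys unfolding degree_def by simp
  define D where "D = real \<Delta>"
  have DC': "D \<ge> C" using DC D_def by simp
  have De: "D * \<epsilon> \<ge> 100 * real t"
  proof -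
    have "D \<ge> 100 * real t / \<epsilon>" using DC' Ceq K1ge t1 by linarith
    thus ?thesis using e0 by (simp add: pos_divide_le_eq)
  qed
  have D100: "D \<ge> 100 * real t" using DC' Cge K1ge t1 by linarith
  have DeD: "D * \<epsilon> \<le> D" and DeD0: "0 \<le> D * \<epsilon>"
    using e0 e1 D100 t1 by (auto intro!: mult_left_le)
  have eq1: "(1 - \<epsilon>/4) * D = D - D * \<epsilon> / 4" and eq2: "(1 - \<epsilon>) * D = D - D * \<epsilon>"
    by (simp_all add: algebra_simps)
  have eq3: "\<epsilon>/8 * (D - 1) = D * \<epsilon> / 8 - \<epsilon> / 8" by (simp add: field_simps)
  define P where "P = ?N ys"
  have cP: "card P = \<Delta>" using dys unfolding P_def degree_def by simp
  have fP: "finite P" unfolding P_def using finN .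
  have PX: "P \<subseteq> X" unfolding P_def Neq using YtoX[OF ysY] by auto
  define Q where "Q = {y\<in>Y. (1 - \<epsilon>/4) * D \<le> real (card (?N y \<inter> P))}"
  define Q2 where "Q2 = {y\<in>Y. D / 2 \<le> real (card (?N y \<inter> P))}"
  define W where "W = Q2 - Q"
  define good where "good x \<longleftrightarrow> (\<exists>y\<in>Q. E x y)" for x
  have QQ2: "Q \<subseteq> Q2"
  proof
    fix y assume "y \<in> Q"
    hence "y \<in> Y" "(1 - \<epsilon>/4) * D \<le> real (card (?N y \<inter> P))" unfolding Q_def by auto
    moreover have "D / 2 \<le> (1 - \<epsilon>/4) * D" unfolding eq1 eq2 using e1 e0 De D100 t1 DeD DeD0 by linarith
    ultimately show "y \<in> Q2" unfolding Q2_def by auto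
  qed
  have ysQ: "ys \<in> Q"
  proof -
    have "?N ys \<inter> P = P" unfolding P_def by simp
    hence "real (card (?N ys \<inter> P)) = D" using cP D_def by simp
    moreover have "(1 - \<epsilon>/4) * D \<le> D" unfolding eq1 eq2 using e1 e0 De D100 t1 DeD DeD0 by linarith
    ultimately show ?thesis unfolding Q_def using ysY by auto
  qed
  have Qlow: "Q \<inter> low_set V E Y \<epsilon> = {}"
  proof (rule ccontr)
    assume "Q \<inter> low_set V E Y \<epsilon> \<noteq> {}"
    then obtain y where yQ: "y \<in> Q" and yl: "y \<in> low_set V E Y \<epsilon>" by blast
    have "real (degree V E y) \<le> (1 - \<epsilon>) * D"
      using yl unfolding low_set_def D_def \<Delta>_def by auto
    moreover have "card (?N y \<inter> P) \<le> card (?N y)" using finN by (intro card_mono) auto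
    moreover have "(1 - \<epsilon>/4) * D \<le> real (card (?N y \<inter> P))" using yQ unfolding Q_def by auto
    moreover have "(1 - \<epsilon>) * D < (1 - \<epsilon>/4) * D" unfolding eq1 eq2 using e1 e0 De D100 t1 DeD DeD0 by linarith
    ultimately show False unfolding degree_def by linarith
  qed
  have U1: "real (card (?N x - Q)) < K1" if xP: "x \<in> P" for x
  proof -
    have exy: "E x ys" using xP sym unfolding P_def Neq by auto
    have xX: "x \<in> X" using xP PX by auto
    have cT: "card (P - {x}) = \<Delta> - 1" using xP fP cP by simp
    have D1: "\<Delta> \<ge> 1" using D100 t1 D_def by simp
    have rcT: "real (card (P - {x})) = D - 1" using cT D1 D_def by simp
    have "real (card (?N x - Q)) < real t * (2 / (\<epsilon>/8)) ^ t"
    proof (rule few[OF G BP nb tp exy])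
      show "P - {x} \<subseteq> ?N ys - {x}" unfolding P_def by auto
      show "?N x - Q \<subseteq> ?N x - {ys}" using ysQ by auto
      show "0 < \<epsilon>/8" using e0 by simp
      show "2 * real t \<le> \<epsilon>/8 * real (card (P - {x}))"
        unfolding rcT eq3 using De e1 t1 by linarith
      show "\<forall>r\<in>?N x - Q. \<epsilon>/8 * real (card (P - {x})) \<le> real (card {u\<in>P - {x}. \<not> E r u})"
      proof
        fix r assume r: "r \<in> ?N x - Q"
        have rY: "r \<in> Y" using r XtoY[OF xX] Neq by auto
        have c: "real (card (?N r \<inter> P)) < (1 - \<epsilon>/4) * D" using r rY unfolding Q_def by auto
        have "real (card (P - {x})) - real (card (?N r \<inter> P)) \<le> real (card {u\<in>P - {x}. \<not> E r u})"
          using fP finN by (intro miss_card) (auto simp: Neq)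
        moreover have "\<epsilon>/8 * (D - 1) \<le> (D - 1) - (1 - \<epsilon>/4) * D"
          unfolding eq1 eq3 using De t1 e0 e1 by linarith
        ultimately show "\<epsilon>/8 * real (card (P - {x})) \<le> real (card {u\<in>P - {x}. \<not> E r u})"
          unfolding rcT using c by linarith
      qed
    qed
    moreover have "real t * (2 / (\<epsilon>/8)) ^ t = K1" unfolding K1_def by simp
    ultimately show ?thesis by simp
  qed
  have fW: "finite W" unfolding W_def Q2_def using fY by simp
  have Wcount: "real (card W) \<le> 2 * K1"
  proof -
    have eqs: "(\<Sum>x\<in>P. card {w\<in>W. E x w}) = (\<Sum>w\<in>W. card {x\<in>P. E x w})"
      using dcount[OF fP fW, of "\<lambda>r u. E u r"] by simp
    have lo: "real (card W) * (D / 2) \<le> real (\<Sum>w\<in>W. card {x\<in>P. E x w})"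
    proof -
      have "\<forall>w\<in>W. D / 2 \<le> real (card {x\<in>P. E x w})"
      proof
        fix w assume "w \<in> W"
        hence "D / 2 \<le> real (card (?N w \<inter> P))" unfolding W_def Q2_def by auto
        moreover have "?N w \<inter> P = {x\<in>P. E x w}" using sym Neq by auto
        ultimately show "D / 2 \<le> real (card {x\<in>P. E x w})" by simp
      qed
      hence "(\<Sum>w\<in>W. D / 2) \<le> (\<Sum>w\<in>W. real (card {x\<in>P. E x w}))" by (intro sum_mono) auto
      thus ?thesis by (simp add: of_nat_sum)
    qed
    have hi: "real (\<Sum>x\<in>P. card {w\<in>W. E x w}) \<le> D * K1"
    proof -
      have "\<forall>x\<in>P. real (card {w\<in>W. E x w}) \<le> K1"
      proof
        fix x assume xP: "x \<in> P"
        have "{w\<in>W. E x w} \<subseteq> ?N x - Q" unfolding W_def Neq by auto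
        hence "card {w\<in>W. E x w} \<le> card (?N x - Q)" using finN by (intro card_mono) auto
        thus "real (card {w\<in>W. E x w}) \<le> K1" using U1[OF xP] by linarith
      qed
      hence "(\<Sum>x\<in>P. real (card {w\<in>W. E x w})) \<le> (\<Sum>x\<in>P. K1)" by (intro sum_mono) auto
      thus ?thesis using cP D_def by (simp add: of_nat_sum)
    qed
    have "real (card W) * (D / 2) \<le> D * K1" using lo hi eqs by simp
    moreover have "real (card W) * D = 2 * (real (card W) * (D / 2))" "(2 * K1) * D = 2 * (D * K1)" by simp_all
    ultimately have "real (card W) * D \<le> (2 * K1) * D" by linarith
    moreover have "D > 0" using D100 t1 by linarith
    ultimately show ?thesis by simp
  qed
  have U2: "real (card (?N x - Q2)) < K2" if xX: "x \<in> X" and yQ: "y \<in> Q" and exy: "E x y" for x y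
  proof -
    define T where "T = (?N y \<inter> P) - {x}"
    have yY: "y \<in> Y" using yQ unfolding Q_def by auto
    have cNP: "(1 - \<epsilon>/4) * D \<le> real (card (?N y \<inter> P))" using yQ unfolding Q_def by auto
    have "card (?N y \<inter> P) \<le> card T + 1"
    proof (cases "x \<in> ?N y \<inter> P")
      case True
      thus ?thesis unfolding T_def using card_Suc_Diff1[OF _ True] fP by simp
    next
      case False
      hence "T = ?N y \<inter> P" unfolding T_def by simp
      thus ?thesis by simp
    qed
    hence cT: "real (card T) \<ge> (1 - \<epsilon>/4) * D - 1" using cNP by linarith
    have cT2: "real (card T) \<ge> 3/4 * D - 1"
    proof -
      have "(1 - \<epsilon>/4) * D \<ge> 3/4 * D" unfolding eq1 eq2 using e1 e0 De D100 t1 DeD DeD0 by linarith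
      thus ?thesis using cT by linarith
    qed
    have "real (card (?N x - Q2)) < real t * (2 / (1/4)) ^ t"
    proof (rule few[OF G BP nb tp exy])
      show "T \<subseteq> ?N y - {x}" unfolding T_def by auto
      show "?N x - Q2 \<subseteq> ?N x - {y}" using yQ QQ2 by auto
      show "(0::real) < 1/4" by simp
      show "2 * real t \<le> 1/4 * real (card T)" using cT2 D100 t1 by linarith
      show "\<forall>r\<in>?N x - Q2. 1/4 * real (card T) \<le> real (card {u\<in>T. \<not> E r u})"
      proof
        fix r assume r: "r \<in> ?N x - Q2"
        have rY: "r \<in> Y" using r XtoY[OF xX] Neq by auto
        have c: "real (card (?N r \<inter> P)) < D / 2" using r rY unfolding Q2_def by auto
        have fT: "finite T" unfolding T_def using fP by simp
        have "real (card T) - real (card (?N r \<inter> P)) \<le> real (card {u\<in>T. \<not> E r u})"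
          using fT finN by (intro miss_card) (auto simp: Neq T_def)
        thus "1/4 * real (card T) \<le> real (card {u\<in>T. \<not> E r u})"
          using c cT2 D100 t1 by linarith
      qed
    qed
    moreover have "real t * (2 / (1/4)) ^ t = K2" unfolding K2_def by simp
    ultimately show ?thesis by simp
  qed
  have goodB: "real (card (?N x - Q)) < Bd" if xX: "x \<in> X" and gx: "good x" for x
  proof -
    obtain y where yQ: "y \<in> Q" and exy: "E x y" using gx unfolding good_def by auto
    have "?N x - Q \<subseteq> (?N x - Q2) \<union> W" unfolding W_def Q2_def using XtoY[OF xX] Neq by auto
    hence "card (?N x - Q) \<le> card ((?N x - Q2) \<union> W)" using finN fW by (intro card_mono) auto
    also have "\<dots> \<le> card (?N x - Q2) + card W" by (rule card_Un_le)
    finally have "real (card (?N x - Q)) \<le> real (card (?N x - Q2)) + real (card W)" by linarith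
    thus ?thesis using U2[OF xX yQ exy] Wcount unfolding Bd_def by linarith
  qed
  have BdC: "2 * Bd \<le> C - 1"
  proof -
    have a: "2 * Bd \<le> 6 * K1" unfolding Bd_def using K21 by (smt (verit))
    have b: "6 * K1 \<le> C - 1" using Cge K1ge t1 by linarith
    show ?thesis using a b by linarith
  qed
  have K3C: "2 + 2 * K3 < C" using Cge K1ge K21 K32 t1 by linarith
  have tC: "4 * real t \<le> C - 1" using Cge K1ge K21 K32 t1 by linarith
  have U3: "good x0'" if x1X: "x1 \<in> X" and g1: "good x1" and e1y: "E x1 y" and ey0: "E y x0'" for x1 y x0'
  proof (rule ccontr)
    assume ng: "\<not> good x0'"
    have yY: "y \<in> Y" using XtoY[OF x1X e1y] .
    have x0'X: "x0' \<in> X" using YtoX[OF yY ey0] .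
    have yV: "y \<in> V" using yY XY by blast
    have ey1: "E y x1" using sym e1y .
    define Ra where "Ra = {x' \<in> ?N y - {x1}. \<not> good x'}"
    define Ta where "Ta = ?N x1 - {y}"
    define Rb where "Rb = {x' \<in> ?N y - {x0'}. good x'}"
    define Tb where "Tb = ?N x0' - {y}"
    have x1V: "x1 \<in> V" and x0'V: "x0' \<in> V" using x1X x0'X XY by blast+
    have fTa: "finite Ta" and fTb: "finite Tb" unfolding Ta_def Tb_def using finN by auto
    have cTa: "real (card Ta) \<ge> C - 1"
    proof -
      have "y \<in> ?N x1" using e1y Neq by auto
      hence "card (?N x1) = card Ta + 1" unfolding Ta_def using card_Suc_Diff1[OF finN] by simp
      thus ?thesis using deg[OF x1V] by linarith
    qed
    have cTb: "real (card Tb) \<ge> C - 1"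
    proof -
      have "y \<in> ?N x0'" using ey0 sym Neq by auto
      hence "card (?N x0') = card Tb + 1" unfolding Tb_def using card_Suc_Diff1[OF finN] by simp
      thus ?thesis using deg[OF x0'V] by linarith
    qed
    have Ra_b: "real (card Ra) < real t * (2 / (1/2)) ^ t"
    proof (rule few[OF G BP nb tp ey1])
      show "Ta \<subseteq> ?N x1 - {y}" unfolding Ta_def by auto
      show "Ra \<subseteq> ?N y - {x1}" unfolding Ra_def by auto
      show "(0::real) < 1/2" by simp
      show "2 * real t \<le> 1/2 * real (card Ta)" using cTa tC by linarith
      show "\<forall>r\<in>Ra. 1/2 * real (card Ta) \<le> real (card {u\<in>Ta. \<not> E r u})"
      proof
        fix r assume r: "r \<in> Ra"
        have "{u\<in>Ta. E r u} \<subseteq> ?N x1 - Q"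
        proof
          fix u assume u: "u \<in> {u\<in>Ta. E r u}"
          hence "u \<notin> Q" using r unfolding Ra_def good_def by auto
          thus "u \<in> ?N x1 - Q" using u unfolding Ta_def by auto
        qed
        hence "real (card Ta) - real (card (?N x1 - Q)) \<le> real (card {u\<in>Ta. \<not> E r u})"
          using fTa finN by (intro miss_card) auto
        thus "1/2 * real (card Ta) \<le> real (card {u\<in>Ta. \<not> E r u})"
          using goodB[OF x1X g1] cTa BdC by linarith
      qed
    qed
    have Rb_b: "real (card Rb) < real t * (2 / (1/2)) ^ t"
    proof (rule few[OF G BP nb tp ey0])
      show "Tb \<subseteq> ?N x0' - {y}" unfolding Tb_def by auto
      show "Rb \<subseteq> ?N y - {x0'}" unfolding Rb_def by auto
      show "(0::real) < 1/2" by simp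
      show "2 * real t \<le> 1/2 * real (card Tb)" using cTb tC by linarith
      show "\<forall>r\<in>Rb. 1/2 * real (card Tb) \<le> real (card {u\<in>Tb. \<not> E r u})"
      proof
        fix r assume r: "r \<in> Rb"
        have rX: "r \<in> X" using r YtoX[OF yY] Neq unfolding Rb_def by auto
        have gr: "good r" using r unfolding Rb_def by auto
        have "{u\<in>Tb. E r u} \<subseteq> ?N r - Q"
        proof
          fix u assume u: "u \<in> {u\<in>Tb. E r u}"
          hence "E x0' u" unfolding Tb_def Neq by auto
          hence "u \<notin> Q" using ng unfolding good_def by auto
          thus "u \<in> ?N r - Q" using u Neq by auto
        qed
        hence "real (card Tb) - real (card (?N r - Q)) \<le> real (card {u\<in>Tb. \<not> E r u})"
          using fTb finN by (intro miss_card) auto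
        thus "1/2 * real (card Tb) \<le> real (card {u\<in>Tb. \<not> E r u})"
          using goodB[OF rX gr] cTb BdC by linarith
      qed
    qed
    have K3eq: "real t * (2 / (1/2)) ^ t = K3" unfolding K3_def by simp
    have "?N y \<subseteq> {x0', x1} \<union> Ra \<union> Rb" unfolding Ra_def Rb_def by auto
    hence "card (?N y) \<le> card ({x0', x1} \<union> Ra \<union> Rb)"
      using finN unfolding Ra_def Rb_def by (intro card_mono) auto
    also have "\<dots> \<le> card {x0', x1} + card Ra + card Rb"
      by (metis (no_types, lifting) add_le_mono card_Un_le le_refl order_trans)
    also have "\<dots> \<le> 2 + card Ra + card Rb"
    proof -
      have "card {x0', x1} \<le> 2" by (simp add: card_insert_if)
      thus ?thesis by linarith
    qed
    finally have "real (card (?N y)) \<le> 2 + real (card Ra) + real (card Rb)" by linarith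
    hence "real (card (?N y)) < C" using Ra_b Rb_b K3eq K3C by linarith
    thus False using deg[OF yV] by linarith
  qed
  have reach: "E\<^sup>*\<^sup>* ys v \<Longrightarrow> (v \<in> X \<longrightarrow> good v) \<and> (v \<in> Y \<longrightarrow> (\<forall>x. E v x \<longrightarrow> good x))" for v
  proof (induction rule: rtranclp_induct)
    case base
    have "ys \<notin> X" using ysY XY by blast
    moreover have "\<forall>x. E ys x \<longrightarrow> good x" using ysQ sym unfolding good_def by blast
    ultimately show ?case by blast
  next
    case (step v w)
    show ?case
    proof (intro conjI impI allI)
      assume wX: "w \<in> X"
      hence "v \<in> Y" using side[OF step.hyps(2)] XY(1) by blast
      thus "good w" using step.IH step.hyps(2) by blast
    next
      fix x assume wY: "w \<in> Y" and ewx: "E w x"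
      hence vX: "v \<in> X" using side[OF step.hyps(2)] XY(1) by blast
      hence gv: "good v" using step.IH by blast
      show "good x" using U3[OF vX gv step.hyps(2) ewx] .
    qed
  qed
  have "E\<^sup>*\<^sup>* ys x0" using conn ysV x0V unfolding connected_graph_def by blast
  hence g0: "good x0" using reach x0X by blast
  have "?N x0 \<inter> low_set V E Y \<epsilon> \<subseteq> ?N x0 - Q" using Qlow by blast
  hence "card (?N x0 \<inter> low_set V E Y \<epsilon>) \<le> card (?N x0 - Q)" using finN by (intro card_mono) auto
  hence "real (card (?N x0 \<inter> low_set V E Y \<epsilon>)) < Bd" using goodB[OF x0X g0] by linarith
  thus "real (card (?N x0 \<inter> low_set V E Y \<epsilon>)) \<le> Cf t \<epsilon>"
    using BdC unfolding C_def by linarith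
qed


theorem mainTheorem10:
  shows "\<exists>C :: nat \<Rightarrow> real \<Rightarrow> real. \<forall>t::nat. \<forall>\<epsilon>::real.
    t > 0 \<and> 0 < \<epsilon> \<and> \<epsilon> < 1 \<longrightarrow>
    (\<forall>V E X Y. graph V E \<and> connected_graph V E \<and> bipartite_parts V E X Y \<and> card X = card Y
       \<and> min_degree_ge V E (C t \<epsilon>) \<and> \<not> has_induced_biclaw V E t t \<longrightarrow>
       (\<forall>x\<in>X. real (card (nbhd V E x \<inter> low_set V E Y \<epsilon>)) \<le> C t \<epsilon>) \<and>
       (\<forall>y\<in>Y. real (card (nbhd V E y \<inter> low_set V E X \<epsilon>)) \<le> C t \<epsilon>))"
proof (intro exI[of _ Cf] allI impI)
  fix t :: nat and \<epsilon> :: real and V E X Y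
  assume h: "t > 0 \<and> 0 < \<epsilon> \<and> \<epsilon> < 1"
  assume H: "graph V E \<and> connected_graph V E \<and> bipartite_parts V E X Y \<and> card X = card Y
       \<and> min_degree_ge V E (Cf t \<epsilon>) \<and> \<not> has_induced_biclaw V E t t"
  have BP': "bipartite_parts V E Y X" using H unfolding bipartite_parts_def by blast
  have 1: "\<forall>x\<in>X. real (card (nbhd V E x \<inter> low_set V E Y \<epsilon>)) \<le> Cf t \<epsilon>"
    using half[of t \<epsilon> V E X Y] h H by blast
  have 2: "\<forall>y\<in>Y. real (card (nbhd V E y \<inter> low_set V E X \<epsilon>)) \<le> Cf t \<epsilon>"
    using half[of t \<epsilon> V E Y X] h H BP' by blast
  show "(\<forall>x\<in>X. real (card (nbhd V E x \<inter> low_set V E Y \<epsilon>)) \<le> Cf t \<epsilon>) \<and>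
       (\<forall>y\<in>Y. real (card (nbhd V E y \<inter> low_set V E X \<epsilon>)) \<le> Cf t \<epsilon>)"
    using 1 2 by blast
qed

end
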